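(* Let $G_n(\lambda)=\binom{n}{\lambda}\mathbb P(\sigma(\omega)\in\mathcal T_\lambda)$ for $\lambda\vdash n$. Then \[ Z_n(\beta)\asymp\sum_{\lambda\vdash n}G_n(\lambda), \] and \[ e^{(h/\theta)n}Z_n(\beta,h)\asymp\begin{cases}\sum_{\lambda\vdash n}e^{h\lambda_1}G_n(\lambda),&h>0,\\ \sum_{\lambda\vdash n}e^{h\lambda_\theta}G_n(\lambda),&h<0.\end{cases} \]
   Context: Fix $\theta\in\{2,3,\dots\}$, $\beta>0$, $h\in\mathbb R$. Let $V=\{1,\dots,n\}$, $E$ the set of unordered pairs of distinct elements of $V$. Under $\mathbb P$ (expectation $\mathbb E$), let $\omega=(\omega_{xy}:xy\in E)$ be independent rate-1 Poisson point processes on $[0,\beta/n]$, and $\sigma(\omega)\in\mathcal S_n$ the time-ordered composition of the transpositions $(x,y)$ over all points $t\in\omega_{xy}$. $\mathcal C(\omega)$ is the set of cycles of $\sigma(\omega)$ (including fixed points), $\ell(\omega)=|\mathcal C(\omega)|$, $|\gamma|$ the size of a cycle. $Z_n(\beta)=\mathbb E[\theta^{\ell(\omega)}]$ and $Z_n(\beta,h)=e^{-(h/\theta)n}\mathbb E\big[\prod_{\gamma\in\mathcal C(\omega)}(e^{h|\gamma|}+\theta-1)\big]$. A partition $\lambda\vdash n$ here means $\lambda=(\lambda_1,\dots,\lambda_\theta)$ of nonnegative integers with $\lambda_1\ge\dots\ge\lambda_\theta$ and $\sum\lambda_j=n$; $\binom{n}{\lambda}=n!/(\lambda_1!\cdots\lambda_\theta!)$;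 $\mathcal T_\lambda$ is the Young subgroup of permutations fixing each of the sets $\{1,\dots,\lambda_1\}$, $\{\lambda_1+1,\dots,\lambda_1+\lambda_2\}$, etc. The notation $a_n\asymp b_n$ means there is a constant $C>0$ (not depending on $n$) with $\frac1C b_n\le a_n\le Cb_n$ for all $n$. *)

theory Defs
  imports "HOL-Probability.Probability" "HOL-Combinatorics.Transposition" "HOL-Combinatorics.Orbits"
begin

text \<open>Edges of the complete graph on V = {1..n}: unordered pairs, represented as (x,y) with x < y.\<close>
definition edges :: "nat \<Rightarrow> (nat \<times> nat) set" where
  "edges n = {(x, y). 1 \<le> x \<and> x < y \<and> y \<le> n}"

text \<open>Time-ordered composition of transpositions: the first list element is applied first.\<close>
definition compose_transp :: "(nat \<times> nat) list \<Rightarrow> (nat \<Rightarrow> nat)" where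
  "compose_transp es = fold (\<lambda>(x, y) s. Transposition.transpose x y \<circ> s) es id"

text \<open>Law of sigma(omega): independent rate-1 Poisson point processes on [0, beta/n] on each edge.
  Equivalently the total number of points is Poisson(|E| beta/n) and, listed in time order,
  the edge labels are i.i.d. uniform on E. (For n \<le> 1 there are no edges and sigma = id.)\<close>
definition sigma_pmf :: "nat \<Rightarrow> real \<Rightarrow> (nat \<Rightarrow> nat) pmf" where
  "sigma_pmf n \<beta> =
     (if edges n = {} then return_pmf id
      else bind_pmf (poisson_pmf (\<beta> / real n * real (card (edges n))))
             (\<lambda>k. map_pmf compose_transp (replicate_pmf k (pmf_of_set (edges n)))))"

definition cycles :: "nat \<Rightarrow> (nat \<Rightarrow> nat) \<Rightarrow> nat set set" where
  "cycles n s = (\<lambda>x. orbit s x) ` {1..n}"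

definition Z :: "nat \<Rightarrow> nat \<Rightarrow> real \<Rightarrow> real" where
  "Z \<theta> n \<beta> = measure_pmf.expectation (sigma_pmf n \<beta>) (\<lambda>s. real \<theta> ^ card (cycles n s))"

definition Zh :: "nat \<Rightarrow> nat \<Rightarrow> real \<Rightarrow> real \<Rightarrow> real" where
  "Zh \<theta> n \<beta> h = exp (- (h / real \<theta>) * real n) *
     measure_pmf.expectation (sigma_pmf n \<beta>)
       (\<lambda>s. \<Prod>\<gamma>\<in>cycles n s. exp (h * real (card \<gamma>)) + real \<theta> - 1)"

text \<open>Partitions of n into theta nonincreasing nonnegative parts, lam ! 0 = lambda_1, ...\<close>
definition partitions :: "nat \<Rightarrow> nat \<Rightarrow> nat list set" where
  "partitions \<theta> n = {lam. length lam = \<theta> \<and> sorted_wrt (\<ge>) lam \<and> sum_list lam = n}"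

definition multinom :: "nat \<Rightarrow> nat list \<Rightarrow> real" where
  "multinom n lam = fact n / (\<Prod>j\<leftarrow>lam. fact j)"

text \<open>j-th block (0-based) of the Young subgroup.\<close>
definition young_block :: "nat list \<Rightarrow> nat \<Rightarrow> nat set" where
  "young_block lam j = {sum_list (take j lam) + 1 .. sum_list (take (Suc j) lam)}"

definition young_subgroup :: "nat list \<Rightarrow> (nat \<Rightarrow> nat) set" where
  "young_subgroup lam = {s. \<forall>j < length lam. s ` young_block lam j = young_block lam j}"

definition G :: "nat \<Rightarrow> real \<Rightarrow> nat list \<Rightarrow> real" where
  "G n \<beta> lam = multinom n lam * measure_pmf.prob (sigma_pmf n \<beta>) (young_subgroup lam)"

definition asymp_equiv :: "(nat \<Rightarrow> real) \<Rightarrow> (nat \<Rightarrow> real) \<Rightarrow> bool" where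
  "asymp_equiv a b \<longleftrightarrow> (\<exists>C>0. \<forall>n. b n / C \<le> a n \<and> a n \<le> C * b n)"

end

theory Submission imports Defs "HOL-Combinatorics.Multiset_Permutations" "HOL-Combinatorics.List_Permutation"
begin

lemma conj_transpose:
  assumes "bij p"
  shows "p \<circ> Transposition.transpose x y \<circ> inv p = Transposition.transpose (p x) (p y)"
proof
  fix z
  have "Transposition.transpose (p x) (p y) (p (inv p z)) = p (Transposition.transpose (inv p (p x)) (inv p (p y)) (inv p z))"
    using transpose_apply_commute[OF assms] by blast
  then show "(p \<circ> Transposition.transpose x y \<circ> inv p) z = Transposition.transpose (p x) (p y) z"
    using assms by (simp add: bij_inv_eq_iff bij_is_inj bij_is_surj surj_f_inv_f)
qed

definition pe :: "(nat \<Rightarrow> nat) \<Rightarrow> nat \<times> nat \<Rightarrow> nat \<times> nat" where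
  "pe p e = (min (p (fst e)) (p (snd e)), max (p (fst e)) (p (snd e)))"

lemma transpose_pe: "Transposition.transpose (fst (pe p e)) (snd (pe p e)) = Transposition.transpose (p (fst e)) (p (snd e))"
  unfolding pe_def by (cases "p (fst e) \<le> p (snd e)") (auto simp: min_def max_def transpose_commute)

lemma fold_conj:
  assumes "bij p"
  shows "p \<circ> fold (\<lambda>(x, y) s. Transposition.transpose x y \<circ> s) es s0 \<circ> inv p
       = fold (\<lambda>(x, y) s. Transposition.transpose x y \<circ> s) (map (pe p) es) (p \<circ> s0 \<circ> inv p)"
proof (induction es arbitrary: s0)
  case Nil then show ?case by simp
next
  case (Cons e es)
  obtain x y where e: "e = (x,y)" by force
  define F :: "nat \<times> nat \<Rightarrow> (nat \<Rightarrow> nat) \<Rightarrow> (nat \<Rightarrow> nat)" where "F = (\<lambda>(x, y) s. Transposition.transpose x y \<circ> s)"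
  have Fe: "F e s0 = Transposition.transpose x y \<circ> s0" for s0 unfolding F_def e by simp
  have Fpe: "F (pe p e) s = Transposition.transpose (fst (pe p e)) (snd (pe p e)) \<circ> s" for s
    unfolding F_def by (simp add: case_prod_beta)
  have IH: "p \<circ> fold F es s0 \<circ> inv p = fold F (map (pe p) es) (p \<circ> s0 \<circ> inv p)" for s0
    using Cons.IH unfolding F_def .
  have "p \<circ> (Transposition.transpose x y \<circ> s0) \<circ> inv p
      = (p \<circ> Transposition.transpose x y \<circ> inv p) \<circ> (p \<circ> s0 \<circ> inv p)"
    using inv_f_f[OF bij_is_inj[OF assms]] by (simp add: fun_eq_iff)
  also have "\<dots> = Transposition.transpose (fst (pe p e)) (snd (pe p e)) \<circ> (p \<circ> s0 \<circ> inv p)"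
    using conj_transpose[OF assms] transpose_pe e by simp
  finally have step: "p \<circ> F e s0 \<circ> inv p = F (pe p e) (p \<circ> s0 \<circ> inv p)" unfolding Fe Fpe .
  have "p \<circ> fold F (e # es) s0 \<circ> inv p = p \<circ> fold F es (F e s0) \<circ> inv p" by simp
  also have "\<dots> = fold F (map (pe p) es) (p \<circ> F e s0 \<circ> inv p)" by (rule IH)
  also have "\<dots> = fold F (map (pe p) (e # es)) (p \<circ> s0 \<circ> inv p)" using step by simp
  finally show ?case unfolding F_def .
qed

lemma compose_transp_conj:
  assumes "bij p"
  shows "p \<circ> compose_transp es \<circ> inv p = compose_transp (map (pe p) es)"
proof -
  have "p \<circ> inv p = id" using bij_is_surj[OF assms, unfolded surj_iff] .
  then show ?thesis using fold_conj[OF assms, of es id] unfolding compose_transp_def by simp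
qed

lemma pe_bij:
  assumes "p permutes {1..n}"
  shows "bij_betw (pe p) (edges n) (edges n)"
proof -
  have maps: "pe p ` edges n \<subseteq> edges n"
  proof
    fix e assume "e \<in> pe p ` edges n"
    then obtain x y where xy: "(x,y) \<in> edges n" "e = pe p (x,y)" by auto
    have "x \<in> {1..n}" "y \<in> {1..n}" using xy(1) by (auto simp: edges_def)
    hence "p x \<in> {1..n}" "p y \<in> {1..n}" using assms by (simp_all only: permutes_in_image)
    moreover have "p x \<noteq> p y" using xy(1) permutes_inj[OF assms] by (auto simp: edges_def inj_eq)
    ultimately show "e \<in> edges n" using xy(2) by (auto simp: pe_def edges_def min_def max_def)
  qed
  have inj: "inj_on (pe p) (edges n)"
  proof
    fix e1 e2 assume A: "e1 \<in> edges n" "e2 \<in> edges n" "pe p e1 = pe p e2"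
    have inj: "inj p" using permutes_inj[OF assms] .
    obtain x1 y1 x2 y2 where e: "e1 = (x1,y1)" "e2 = (x2,y2)" by force
    from A e have lt: "x1 < y1" "x2 < y2" by (auto simp: edges_def)
    have mm: "{min a b, max a b} = {a, b}" for a b :: nat by (auto simp: min_def max_def)
    from A(3) e have "min (p x1) (p y1) = min (p x2) (p y2)" "max (p x1) (p y1) = max (p x2) (p y2)"
      unfolding pe_def by simp_all
    hence S: "{p x1, p y1} = {p x2, p y2}" using mm[of "p x1" "p y1"] mm[of "p x2" "p y2"] by argo
    have "p x1 \<in> {p x1, p y1}" "p y1 \<in> {p x1, p y1}" "p x2 \<in> {p x2, p y2}" "p y2 \<in> {p x2, p y2}" by blast+
    hence "p x1 \<in> {p x2, p y2}" "p y1 \<in> {p x2, p y2}" "p x2 \<in> {p x1, p y1}" "p y2 \<in> {p x1, p y1}"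
      unfolding S by blast+
    hence "(x1 = x2 \<or> x1 = y2) \<and> (y1 = x2 \<or> y1 = y2) \<and> (x2 = x1 \<or> x2 = y1) \<and> (y2 = x1 \<or> y2 = y1)"
      using inj by (auto simp: inj_eq)
    then show "e1 = e2" using lt e by auto
  qed
  have fin: "finite (edges n)"
    by (rule finite_subset[of _ "{1..n} \<times> {1..n}"]) (auto simp: edges_def)
  have "pe p ` edges n = edges n" using endo_inj_surj[OF fin maps inj] .
  with inj show ?thesis by (simp add: bij_betw_def)
qed

lemma finite_edges: "finite (edges n)"
  by (rule finite_subset[of _ "{1..n} \<times> {1..n}"]) (auto simp: edges_def)

lemma map_replicate_pmf: "map_pmf (map f) (replicate_pmf k q) = replicate_pmf k (map_pmf f q)"
proof (induction k)
  case 0 then show ?case by simp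
next
  case (Suc k)
  show ?case by (simp add: map_bind_pmf bind_map_pmf map_return_pmf Suc.IH[symmetric])
qed

lemma sigma_conj:
  assumes "p permutes {1..n}"
  shows "map_pmf (\<lambda>s. p \<circ> s \<circ> inv p) (sigma_pmf n \<beta>) = sigma_pmf n \<beta>"
proof (cases "edges n = {}")
  case True
  then show ?thesis using permutes_inv_o[OF assms] by (simp add: sigma_pmf_def)
next
  case False
  have bij: "bij p" using permutes_bij[OF assms] .
  have U: "map_pmf (pe p) (pmf_of_set (edges n)) = pmf_of_set (edges n)"
    using map_pmf_of_set_inj[of "pe p" "edges n"] pe_bij[OF assms] False finite_edges
    by (simp add: bij_betw_def)
  have "map_pmf (\<lambda>s. p \<circ> s \<circ> inv p) (map_pmf compose_transp (replicate_pmf k (pmf_of_set (edges n))))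
      = map_pmf compose_transp (replicate_pmf k (pmf_of_set (edges n)))" for k
  proof -
    have "map_pmf (\<lambda>s. p \<circ> s \<circ> inv p) (map_pmf compose_transp (replicate_pmf k (pmf_of_set (edges n))))
        = map_pmf (compose_transp \<circ> map (pe p)) (replicate_pmf k (pmf_of_set (edges n)))"
    proof -
      have "(\<lambda>s. p \<circ> s \<circ> inv p) \<circ> compose_transp = compose_transp \<circ> map (pe p)"
        by (rule ext) (simp only: comp_apply compose_transp_conj[OF bij])
      then show ?thesis by (simp only: pmf.map_comp)
    qed
    also have "\<dots> = map_pmf compose_transp (map_pmf (map (pe p)) (replicate_pmf k (pmf_of_set (edges n))))"
      by (simp add: pmf.map_comp)
    also have "\<dots> = map_pmf compose_transp (replicate_pmf k (pmf_of_set (edges n)))"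
      by (simp add: map_replicate_pmf U)
    finally show ?thesis .
  qed
  then show ?thesis using False by (simp add: sigma_pmf_def map_bind_pmf)
qed

lemma compose_transp_permutes:
  assumes "set es \<subseteq> edges n" "s0 permutes {1..n}"
  shows "fold (\<lambda>(x, y) s. Transposition.transpose x y \<circ> s) es s0 permutes {1..n}"
proof -
  define F :: "nat \<times> nat \<Rightarrow> (nat \<Rightarrow> nat) \<Rightarrow> (nat \<Rightarrow> nat)" where "F = (\<lambda>(x, y) s. Transposition.transpose x y \<circ> s)"
  have "fold F es s0 permutes {1..n}" using assms
  proof (induction es arbitrary: s0)
    case Nil then show ?case by simp
  next
    case (Cons e es)
    obtain x y where e: "e = (x,y)" by force
    have Fe: "F e s0 = Transposition.transpose x y \<circ> s0" unfolding F_def e by simp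
    have "Transposition.transpose x y permutes {1..n}" using Cons.prems e
      by (intro permutes_swap_id) (auto simp: edges_def)
    hence "F e s0 permutes {1..n}" using Cons.prems permutes_compose Fe by metis
    moreover have "fold F (e # es) s0 = fold F es (F e s0)" by simp
    ultimately show ?case using Cons by simp
  qed
  then show ?thesis unfolding F_def .
qed

lemma sigma_support:
  assumes "s \<in> set_pmf (sigma_pmf n \<beta>)"
  shows "s permutes {1..n}"
proof (cases "edges n = {}")
  case True then show ?thesis using assms by (simp add: sigma_pmf_def permutes_id)
next
  case False
  then obtain es where "set es \<subseteq> edges n" "s = compose_transp es"
    using assms finite_edges by (auto simp: sigma_pmf_def set_replicate_pmf)
  then show ?thesis unfolding compose_transp_def
    using compose_transp_permutes permutes_id by blast
qed


definition pres :: "nat \<Rightarrow> (nat \<Rightarrow> nat) \<Rightarrow> (nat \<Rightarrow> nat) \<Rightarrow> bool" where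
  "pres n c s \<longleftrightarrow> (\<forall>x\<in>{1..n}. c (s x) = c x)"

definition cnt :: "nat \<Rightarrow> (nat \<Rightarrow> nat) \<Rightarrow> nat \<Rightarrow> nat" where
  "cnt n c i = card {x\<in>{1..n}. c x = i}"

definition Col :: "nat \<Rightarrow> nat \<Rightarrow> (nat \<Rightarrow> nat) set" where
  "Col \<theta> n = {1..n} \<rightarrow>\<^sub>E {..<\<theta>}"

lemma perm_in: "p permutes {1..n} \<Longrightarrow> x \<in> {1..n} \<Longrightarrow> p x \<in> {1..(n::nat)}"
  by (simp only: permutes_in_image)

lemma orbit_facts:
  fixes n :: nat
  assumes "s permutes {1..n}" "x \<in> {1..n}"
  shows "x \<in> orbit s x" "orbit s x \<subseteq> {1..n}" "\<And>y. y \<in> orbit s x \<Longrightarrow> orbit s y = orbit s x"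
    "orbit s (s x) = orbit s x"
proof -
  have perm: "permutation s" using assms(1) by (intro permutes_imp_permutation[where S="{1..n}"]) auto
  show "x \<in> orbit s x" using permutation_self_in_orbit[OF perm] .
  show "orbit s x \<subseteq> {1..n}" using permutes_orbit_subset[OF assms] .
  show "\<And>y. y \<in> orbit s x \<Longrightarrow> orbit s y = orbit s x"
    using cyclic_on_orbit'[OF perm] orbit_cyclic_eq3 by metis
  show "orbit s (s x) = orbit s x" using permutation_orbit_step[OF perm] .
qed

lemma pres_const_orbit:
  fixes n :: nat
  assumes "s permutes {1..n}" "x \<in> {1..n}" "pres n c s" "y \<in> orbit s x"
  shows "c y = c x"
  using assms(4)
proof induction
  case base then show ?case using assms(2,3) by (simp add: pres_def)
next
  case (step y)
  have "y \<in> {1..n}" using step.hyps orbit_facts(2)[OF assms(1,2)] by blast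
  then show ?case using step.IH assms(3) by (simp add: pres_def)
qed

lemma stepA:
  fixes h :: real
  assumes sp: "s permutes {1..n}" and th: "\<theta> \<ge> 1"
  shows "(\<Prod>\<gamma>\<in>cycles n s. exp (h * real (card \<gamma>)) + real \<theta> - 1)
       = (\<Sum>c\<in>Col \<theta> n. if pres n c s then exp (h * real (cnt n c 0)) else 0)"
proof -
  define P where "P = cycles n s"
  define w :: "nat \<Rightarrow> nat set \<Rightarrow> real" where "w k \<gamma> = (if k = 0 then exp (h * real (card \<gamma>)) else 1)" for k \<gamma>
  have finP: "finite P" unfolding P_def cycles_def by simp
  have Pchar: "\<gamma> \<in> P \<longleftrightarrow> (\<exists>x\<in>{1..n}. \<gamma> = orbit s x)" for \<gamma> unfolding P_def cycles_def by auto
  have factor: "exp (h * real (card \<gamma>)) + real \<theta> - 1 = (\<Sum>k<\<theta>. w k \<gamma>)" for \<gamma>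
  proof -
    have z: "0 \<in> {..<\<theta>}" using th by simp
    have "(\<Sum>k<\<theta>. w k \<gamma>) = w 0 \<gamma> + (\<Sum>k\<in>{..<\<theta>} - {0}. w k \<gamma>)"
      using sum.remove[OF finite_lessThan z] by blast
    also have "(\<Sum>k\<in>{..<\<theta>} - {0}. w k \<gamma>) = (\<Sum>k\<in>{..<\<theta>} - {0}. 1)"
      by (rule sum.cong) (auto simp: w_def)
    also have "\<dots> = real (\<theta> - 1)" using z by (simp add: card_Diff_singleton)
    finally show ?thesis using th by (simp add: w_def of_nat_diff)
  qed
  have "(\<Prod>\<gamma>\<in>P. exp (h * real (card \<gamma>)) + real \<theta> - 1) = (\<Prod>\<gamma>\<in>P. \<Sum>k<\<theta>. w k \<gamma>)"
    using factor by simp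
  also have "\<dots> = (\<Sum>g\<in>P \<rightarrow>\<^sub>E {..<\<theta>}. \<Prod>\<gamma>\<in>P. w (g \<gamma>) \<gamma>)"
    by (rule prod_sum_PiE) (use finP in auto)
  finally have L: "(\<Prod>\<gamma>\<in>P. exp (h * real (card \<gamma>)) + real \<theta> - 1) = (\<Sum>g\<in>P \<rightarrow>\<^sub>E {..<\<theta>}. \<Prod>\<gamma>\<in>P. w (g \<gamma>) \<gamma>)" .
  define \<phi> where "\<phi> g = (\<lambda>x\<in>{1..n}. g (orbit s x))" for g :: "nat set \<Rightarrow> nat"
  define \<psi> where "\<psi> c = (\<lambda>\<gamma>\<in>P. c (SOME x. x \<in> \<gamma>))" for c :: "nat \<Rightarrow> nat"
  define T where "T = {c\<in>Col \<theta> n. pres n c s}"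
  have some_in: "(SOME y. y \<in> \<gamma>) \<in> \<gamma>" if hg: "\<gamma> \<in> P" for \<gamma>
  proof -
    obtain x where x: "x \<in> {1..n}" "\<gamma> = orbit s x" using hg Pchar by blast
    have "x \<in> \<gamma>" using x orbit_facts(1)[OF sp x(1)] by simp
    then show ?thesis by (rule someI)
  qed
  have some_orbit: "orbit s (SOME y. y \<in> \<gamma>) = \<gamma>" "(SOME y. y \<in> \<gamma>) \<in> {1..n}" if hg: "\<gamma> \<in> P" for \<gamma>
  proof -
    obtain x where x: "x \<in> {1..n}" "\<gamma> = orbit s x" using hg Pchar by blast
    show "orbit s (SOME y. y \<in> \<gamma>) = \<gamma>" using some_in[OF hg] x orbit_facts(3)[OF sp x(1), of "SOME y. y \<in> \<gamma>"] by argo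
    show "(SOME y. y \<in> \<gamma>) \<in> {1..n}" using some_in[OF hg] x orbit_facts(2)[OF sp x(1)] by blast
  qed
  have bij: "bij_betw \<phi> (P \<rightarrow>\<^sub>E {..<\<theta>}) T"
  proof (rule bij_betw_byWitness[where f'=\<psi>])
    show "\<forall>g\<in>P \<rightarrow>\<^sub>E {..<\<theta>}. \<psi> (\<phi> g) = g"
    proof
      fix g assume g: "g \<in> P \<rightarrow>\<^sub>E {..<\<theta>}"
      show "\<psi> (\<phi> g) = g"
      proof
        fix \<gamma> show "\<psi> (\<phi> g) \<gamma> = g \<gamma>"
        proof (cases "\<gamma> \<in> P")
          case True
          have "\<psi> (\<phi> g) \<gamma> = \<phi> g (SOME y. y \<in> \<gamma>)" using True by (simp add: \<psi>_def)
          also have "\<dots> = g (orbit s (SOME y. y \<in> \<gamma>))" using some_orbit(2)[OF True] by (simp add: \<phi>_def)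
          also have "\<dots> = g \<gamma>" using some_orbit(1)[OF True] by simp
          finally show ?thesis .
        next
          case False
          then show ?thesis using PiE_arb[OF g False] by (simp add: \<psi>_def)
        qed
      qed
    qed
    show "\<forall>c\<in>T. \<phi> (\<psi> c) = c"
    proof
      fix c assume c: "c \<in> T"
      show "\<phi> (\<psi> c) = c"
      proof
        fix x show "\<phi> (\<psi> c) x = c x"
        proof (cases "x \<in> {1..n}")
          case True
          have oP: "orbit s x \<in> P" using True Pchar by auto
          have "c (SOME y. y \<in> orbit s x) = c x"
            using pres_const_orbit[OF sp True, of c] c some_in[OF oP] by (auto simp: T_def)
          then show ?thesis using True oP by (simp add: \<phi>_def \<psi>_def)
        next
          case False
          have cC: "c \<in> {1..n} \<rightarrow>\<^sub>E {..<\<theta>}" using c by (simp add: T_def Col_def)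
          show ?thesis using PiE_arb[OF cC False] False by (auto simp: \<phi>_def)
        qed
      qed
    qed
    show "\<phi> ` (P \<rightarrow>\<^sub>E {..<\<theta>}) \<subseteq> T"
    proof
      fix c assume "c \<in> \<phi> ` (P \<rightarrow>\<^sub>E {..<\<theta>})"
      then obtain g where g: "g \<in> P \<rightarrow>\<^sub>E {..<\<theta>}" "c = \<phi> g" by auto
      have "c \<in> Col \<theta> n" unfolding Col_def
      proof (rule PiE_I)
        fix x assume x: "x \<in> {1..n}"
        then have "orbit s x \<in> P" using Pchar by blast
        then show "c x \<in> {..<\<theta>}" using g x by (auto simp: \<phi>_def)
      next
        fix x assume "x \<notin> {1..n}" then show "c x = undefined" using g(2) by (auto simp: \<phi>_def)
      qed
      moreover have "pres n c s"
        unfolding pres_def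
      proof
        fix x assume x: "x \<in> {1..n}"
        then have "s x \<in> {1..n}" using perm_in[OF sp] by blast
        then show "c (s x) = c x" using g x orbit_facts(4)[OF sp x] by (simp add: \<phi>_def)
      qed
      ultimately show "c \<in> T" by (simp add: T_def)
    qed
    show "\<psi> ` T \<subseteq> P \<rightarrow>\<^sub>E {..<\<theta>}"
    proof
      fix g assume "g \<in> \<psi> ` T"
      then obtain c where c: "c \<in> T" "g = \<psi> c" by auto
      have cC: "c \<in> {1..n} \<rightarrow>\<^sub>E {..<\<theta>}" using c by (simp add: T_def Col_def)
      show "g \<in> P \<rightarrow>\<^sub>E {..<\<theta>}"
      proof (rule PiE_I)
        fix \<gamma> assume "\<gamma> \<in> P"
        then show "g \<gamma> \<in> {..<\<theta>}" using c(2) cC some_orbit(2) by (auto simp: \<psi>_def)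
      next
        fix \<gamma> assume "\<gamma> \<notin> P" then show "g \<gamma> = undefined" using c(2) by (simp add: \<psi>_def)
      qed
    qed
  qed
  have disj: "\<gamma>1 \<inter> \<gamma>2 = {}" if hh: "\<gamma>1 \<in> P" "\<gamma>2 \<in> P" "\<gamma>1 \<noteq> \<gamma>2" for \<gamma>1 \<gamma>2
  proof (rule ccontr)
    assume "\<gamma>1 \<inter> \<gamma>2 \<noteq> {}"
    then obtain z where z: "z \<in> \<gamma>1" "z \<in> \<gamma>2" by auto
    obtain x1 where x1: "x1 \<in> {1..n}" "\<gamma>1 = orbit s x1" using hh(1) Pchar by blast
    obtain x2 where x2: "x2 \<in> {1..n}" "\<gamma>2 = orbit s x2" using hh(2) Pchar by blast
    have "\<gamma>1 = orbit s z" using orbit_facts(3)[OF sp x1(1), of z] z x1 by argo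
    moreover have "\<gamma>2 = orbit s z" using orbit_facts(3)[OF sp x2(1), of z] z x2 by argo
    ultimately show False using hh by simp
  qed
  have finS: "finite \<gamma>" if hg: "\<gamma> \<in> P" for \<gamma>
  proof -
    obtain x where x: "x \<in> {1..n}" "\<gamma> = orbit s x" using hg Pchar by blast
    show ?thesis using orbit_facts(2)[OF sp x(1)] x(2) finite_subset by blast
  qed
  have weight: "(\<Prod>\<gamma>\<in>P. w (g \<gamma>) \<gamma>) = exp (h * real (cnt n (\<phi> g) 0))" if g: "g \<in> P \<rightarrow>\<^sub>E {..<\<theta>}" for g
  proof -
    have "(\<Prod>\<gamma>\<in>P. w (g \<gamma>) \<gamma>) = (\<Prod>\<gamma>\<in>P. if g \<gamma> = 0 then exp (h * real (card \<gamma>)) else 1)"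
      by (simp add: w_def)
    also have "\<dots> = (\<Prod>\<gamma>\<in>{\<gamma>\<in>P. g \<gamma> = 0}. exp (h * real (card \<gamma>)))"
      using finP by (simp add: prod.inter_filter)
    also have "\<dots> = exp (\<Sum>\<gamma>\<in>{\<gamma>\<in>P. g \<gamma> = 0}. h * real (card \<gamma>))"
      using finP by (simp add: exp_sum)
    also have "(\<Sum>\<gamma>\<in>{\<gamma>\<in>P. g \<gamma> = 0}. h * real (card \<gamma>)) = h * real (\<Sum>\<gamma>\<in>{\<gamma>\<in>P. g \<gamma> = 0}. card \<gamma>)"
      by (simp add: sum_distrib_left)
    also have "(\<Sum>\<gamma>\<in>{\<gamma>\<in>P. g \<gamma> = 0}. card \<gamma>) = card (\<Union>{\<gamma>\<in>P. g \<gamma> = 0})"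
      by (rule card_Union_disjoint[symmetric]) (use finP finS disj in \<open>auto simp: pairwise_def disjnt_def\<close>)
    also have "\<Union>{\<gamma>\<in>P. g \<gamma> = 0} = {x\<in>{1..n}. \<phi> g x = 0}"
    proof (rule set_eqI)
      fix x
      show "x \<in> \<Union>{\<gamma>\<in>P. g \<gamma> = 0} \<longleftrightarrow> x \<in> {x\<in>{1..n}. \<phi> g x = 0}"
      proof
        assume "x \<in> \<Union>{\<gamma>\<in>P. g \<gamma> = 0}"
        then obtain \<gamma> where ga: "\<gamma> \<in> P" "g \<gamma> = 0" "x \<in> \<gamma>" by auto
        obtain y where y: "y \<in> {1..n}" "\<gamma> = orbit s y" using ga Pchar by auto
        have xn: "x \<in> {1..n}" using orbit_facts(2)[OF sp y(1)] y ga by blast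
        have "orbit s x = \<gamma>" using orbit_facts(3)[OF sp y(1), of x] y ga by argo
        then show "x \<in> {x\<in>{1..n}. \<phi> g x = 0}" using xn ga by (simp add: \<phi>_def)
      next
        assume "x \<in> {x\<in>{1..n}. \<phi> g x = 0}"
        then have "x \<in> {1..n}" "g (orbit s x) = 0" by (auto simp: \<phi>_def)
        moreover then have "orbit s x \<in> P" "x \<in> orbit s x" using Pchar orbit_facts(1)[OF sp] by auto
        ultimately show "x \<in> \<Union>{\<gamma>\<in>P. g \<gamma> = 0}" by blast
      qed
    qed
    finally show ?thesis by (simp add: cnt_def)
  qed
  have finCol: "finite (Col \<theta> n)" unfolding Col_def by (simp add: finite_PiE)
  have "(\<Sum>c\<in>Col \<theta> n. if pres n c s then exp (h * real (cnt n c 0)) else 0)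
      = (\<Sum>c\<in>T. exp (h * real (cnt n c 0)))"
    unfolding T_def using finCol by (simp add: sum.inter_filter)
  also have "\<dots> = (\<Sum>g\<in>P \<rightarrow>\<^sub>E {..<\<theta>}. exp (h * real (cnt n (\<phi> g) 0)))"
    using sum.reindex_bij_betw[OF bij, of "\<lambda>c. exp (h * real (cnt n c 0))"] by simp
  also have "\<dots> = (\<Sum>g\<in>P \<rightarrow>\<^sub>E {..<\<theta>}. \<Prod>\<gamma>\<in>P. w (g \<gamma>) \<gamma>)"
    using weight by (intro sum.cong) auto
  finally have R: "(\<Sum>c\<in>Col \<theta> n. if pres n c s then exp (h * real (cnt n c 0)) else 0)
      = (\<Sum>g\<in>P \<rightarrow>\<^sub>E {..<\<theta>}. \<Prod>\<gamma>\<in>P. w (g \<gamma>) \<gamma>)" .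
  have "(\<Prod>\<gamma>\<in>P. exp (h * real (card \<gamma>)) + real \<theta> - 1)
       = (\<Sum>c\<in>Col \<theta> n. if pres n c s then exp (h * real (cnt n c 0)) else 0)"
    by (rule trans[OF L R[symmetric]])
  then show ?thesis unfolding P_def .
qed


lemma pres_conj:
  assumes "p permutes {1..n}"
  shows "pres n c (p \<circ> s \<circ> inv p) \<longleftrightarrow> pres n (c \<circ> p) s"
proof
  assume H: "pres n c (p \<circ> s \<circ> inv p)"
  show "pres n (c \<circ> p) s" unfolding pres_def
  proof
    fix x assume x: "x \<in> {1..n}"
    have "p x \<in> {1..n}" using perm_in[OF assms x] .
    then have "c (p (s (inv p (p x)))) = c (p x)" using H by (simp add: pres_def)
    then show "(c \<circ> p) (s x) = (c \<circ> p) x" using permutes_inverses(2)[OF assms] by simp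
  qed
next
  assume H: "pres n (c \<circ> p) s"
  show "pres n c (p \<circ> s \<circ> inv p)" unfolding pres_def
  proof
    fix y assume y: "y \<in> {1..n}"
    have "inv p y \<in> {1..n}" using perm_in[OF permutes_inv[OF assms] y] .
    then have "c (p (s (inv p y))) = c (p (inv p y))" using H by (simp add: pres_def)
    then show "c ((p \<circ> s \<circ> inv p) y) = c y" using permutes_inverses(1)[OF assms] by simp
  qed
qed

lemma prob_pres_perm:
  assumes "p permutes {1..n}"
  shows "measure_pmf.prob (sigma_pmf n \<beta>) {s. pres n (c \<circ> p) s} = measure_pmf.prob (sigma_pmf n \<beta>) {s. pres n c s}"
proof -
  have "measure_pmf.prob (sigma_pmf n \<beta>) {s. pres n c s}
      = measure_pmf.prob (map_pmf (\<lambda>s. p \<circ> s \<circ> inv p) (sigma_pmf n \<beta>)) {s. pres n c s}"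
    using sigma_conj[OF assms] by simp
  also have "\<dots> = measure_pmf.prob (sigma_pmf n \<beta>) {s. pres n (c \<circ> p) s}"
    using pres_conj[OF assms] by (simp add: vimage_def)
  finally show ?thesis by simp
qed

lemma pres_cong:
  assumes "\<And>x. x \<in> {1..n} \<Longrightarrow> c x = d x" "s permutes {1..n}"
  shows "pres n c s \<longleftrightarrow> pres n d s"
proof -
  have "c (s x) = d (s x)" if "x \<in> {1..n}" for x using assms(1)[OF perm_in[OF assms(2) that]] .
  then show ?thesis unfolding pres_def using assms(1) by auto
qed

lemma pres_inj:
  assumes "inj \<tau>"
  shows "pres n (\<tau> \<circ> c) s \<longleftrightarrow> pres n c s"
  using assms by (auto simp: pres_def inj_eq)

lemma measure_pmf_cong_support:
  assumes "\<And>x. x \<in> set_pmf M \<Longrightarrow> x \<in> A \<longleftrightarrow> x \<in> B"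
  shows "measure_pmf.prob M A = measure_pmf.prob M B"
proof -
  have "measure_pmf.prob M A = measure_pmf.prob M (A \<inter> set_pmf M)" by (simp add: measure_Int_set_pmf)
  also have "A \<inter> set_pmf M = B \<inter> set_pmf M" using assms by blast
  also have "measure_pmf.prob M (B \<inter> set_pmf M) = measure_pmf.prob M B" by (simp add: measure_Int_set_pmf)
  finally show ?thesis .
qed

lemma cnt_list_gen:
  assumes "distinct L"
  shows "count (mset (map f L)) i = card {x\<in>set L. f x = i}"
  using assms
proof (induction L)
  case Nil then show ?case by simp
next
  case (Cons a L)
  have fin: "finite {x\<in>set L. f x = i}" by simp
  have na: "a \<notin> {x\<in>set L. f x = i}" using Cons.prems by simp
  have e: "{x\<in>set (a#L). f x = i} = (if f a = i then insert a {x\<in>set L. f x = i} else {x\<in>set L. f x = i})" by auto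
  show ?case using Cons fin na unfolding e by (simp add: card_insert_disjoint)
qed

lemma same_counts_perm:
  assumes c: "\<And>x. x \<in> {1..n} \<Longrightarrow> c x < \<theta>" and d: "\<And>x. x \<in> {1..n} \<Longrightarrow> d x < \<theta>"
    and eq: "\<And>i. i < \<theta> \<Longrightarrow> cnt n c i = cnt n d i"
  shows "\<exists>p. p permutes {1..n} \<and> (\<forall>x\<in>{1..n}. d x = c (p x))"
proof -
  define xs where "xs = map c [1..<Suc n]"
  define ys where "ys = map d [1..<Suc n]"
  have cnt_list: "count (mset (map f [1..<Suc n])) i = cnt n f i" for f i
  proof -
    have d: "distinct [1..<Suc n]" by simp
    have st: "set [1..<Suc n] = {1..n}" by auto
    show ?thesis using cnt_list_gen[OF d, of f i, unfolded st] unfolding cnt_def .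
  qed
  have "mset xs = mset ys"
  proof (rule multiset_eqI)
    fix i
    show "count (mset xs) i = count (mset ys) i"
    proof (cases "i < \<theta>")
      case True then show ?thesis using eq cnt_list unfolding xs_def ys_def by metis
    next
      case False
      then have "i \<notin> set xs" "i \<notin> set ys" using c d by (auto simp: xs_def ys_def)
      then show ?thesis by (metis count_eq_zero_iff set_mset_mset)
    qed
  qed
  then obtain f where f: "bij_betw f {..<length xs} {..<length ys}" "\<forall>i<length xs. xs ! i = ys ! f i"
    using permutation_Ex_bij by blast
  have len: "length xs = n" "length ys = n" by (auto simp: xs_def ys_def)
  define g where "g = inv_into {..<n} f"
  have g: "bij_betw g {..<n} {..<n}" using f(1) len by (simp add: g_def bij_betw_inv_into)
  have fg: "f (g j) = j" if "j < n" for j using f(1) len that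
    by (simp add: g_def bij_betw_inv_into_right)
  define p where "p x = (if x \<in> {1..n} then Suc (g (x - 1)) else x)" for x
  have pb: "bij_betw p {1..n} {1..n}"
  proof -
    have "bij_betw (\<lambda>x. x - 1) {1..n} {..<n}"
      by (rule bij_betw_byWitness[where f'=Suc]) auto
    moreover have "bij_betw Suc {..<n} {1..n}"
      by (rule bij_betw_byWitness[where f'="\<lambda>x. x - 1"]) auto
    ultimately have "bij_betw (Suc \<circ> g \<circ> (\<lambda>x. x - 1)) {1..n} {1..n}"
      using g bij_betw_trans by blast
    then show ?thesis by (rule bij_betw_cong[THEN iffD1, rotated]) (auto simp: p_def)
  qed
  have px: "p x = x" if "x \<notin> {1..n}" for x using that unfolding p_def by auto
  have pp: "p permutes {1..n}" using bij_imp_permutes[OF pb px] by blast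
  have "d x = c (p x)" if x: "x \<in> {1..n}" for x
  proof -
    have j: "x - 1 < n" using x by auto
    have gj: "g (x - 1) < n" using g j by (auto simp: bij_betw_def)
    have "xs ! g (x - 1) = ys ! f (g (x - 1))" using f(2) gj len by simp
    also have "\<dots> = ys ! (x - 1)" using fg[OF j] by simp
    finally have E: "xs ! g (x - 1) = ys ! (x - 1)" .
    have xn: "xs ! k = c (Suc k)" if "k < n" for k
      unfolding xs_def using that by (simp del: upt_Suc add: nth_upt)
    have yn: "ys ! k = d (Suc k)" if "k < n" for k
      unfolding ys_def using that by (simp del: upt_Suc add: nth_upt)
    have "Suc (x - 1) = x" using x by simp
    then have "c (Suc (g (x - 1))) = d x" using E xn[OF gj] yn[OF j] by simp
    then show ?thesis using x by (simp add: p_def)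
  qed
  then show ?thesis using pp by blast
qed


lemma perm_in_lt: "t permutes {..<(m::nat)} \<Longrightarrow> a < m \<Longrightarrow> t a < m"
  by (metis lessThan_iff permutes_in_image)

definition ps :: "nat list \<Rightarrow> nat \<Rightarrow> nat" where "ps lam j = sum_list (take j lam)"
definition cl :: "nat list \<Rightarrow> nat \<Rightarrow> nat" where "cl lam x = (LEAST j. x \<le> ps lam (Suc j))"

lemma ps_mono: "j \<le> k \<Longrightarrow> ps lam j \<le> ps lam k"
proof -
  assume "j \<le> k"
  then obtain d where k: "k = j + d" using le_Suc_ex by blast
  show ?thesis unfolding ps_def k take_add by simp
qed

lemma ps_Suc: "j < length lam \<Longrightarrow> ps lam (Suc j) = ps lam j + lam ! j"
  unfolding ps_def by (simp add: take_Suc_conv_app_nth)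

lemma ps_0: "ps lam 0 = 0" by (simp add: ps_def)
lemma ps_len: "ps lam (length lam) = sum_list lam" by (simp add: ps_def)

lemma block_iff: "x \<in> young_block lam j \<longleftrightarrow> ps lam j < x \<and> x \<le> ps lam (Suc j)"
  unfolding young_block_def ps_def by auto

lemma cl_props:
  assumes "length lam = \<theta>" "sum_list lam = n" "x \<in> {1..n}"
  shows "cl lam x < \<theta>" "x \<in> young_block lam (cl lam x)"
proof -
  have th: "\<theta> \<ge> 1" using assms by (cases \<theta>) auto
  have ex: "x \<le> ps lam (Suc (\<theta> - 1))" using assms th ps_len[of lam] by simp
  have L: "x \<le> ps lam (Suc (cl lam x))" unfolding cl_def by (rule LeastI[of "\<lambda>j. x \<le> ps lam (Suc j)", OF ex])
  have "cl lam x \<le> \<theta> - 1" unfolding cl_def by (rule Least_le[of "\<lambda>j. x \<le> ps lam (Suc j)", OF ex])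
  then show "cl lam x < \<theta>" using th by simp
  have "ps lam (cl lam x) < x"
  proof (cases "cl lam x")
    case 0 then show ?thesis using assms(3) by (simp add: ps_0)
  next
    case (Suc j)
    have "j < cl lam x" using Suc by simp
    then have "\<not> x \<le> ps lam (Suc j)" unfolding cl_def by (rule not_less_Least)
    then show ?thesis using Suc by simp
  qed
  then show "x \<in> young_block lam (cl lam x)" using L by (simp add: block_iff)
qed

lemma cl_unique:
  assumes "x \<in> young_block lam j"
  shows "cl lam x = j"
  unfolding cl_def
proof (rule Least_equality)
  show "x \<le> ps lam (Suc j)" using assms by (simp add: block_iff)
  fix k assume k: "x \<le> ps lam (Suc k)"
  show "j \<le> k"
  proof (rule ccontr)
    assume "\<not> j \<le> k"
    then have "ps lam (Suc k) \<le> ps lam j" by (intro ps_mono) simp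
    then show False using k assms by (simp add: block_iff)
  qed
qed

lemma block_sub:
  assumes "length lam = \<theta>" "sum_list lam = n" "j < \<theta>"
  shows "young_block lam j \<subseteq> {1..n}"
proof
  fix x assume x: "x \<in> young_block lam j"
  have "ps lam (Suc j) \<le> ps lam \<theta>" using assms by (intro ps_mono) simp
  then show "x \<in> {1..n}" using x assms ps_len[of lam] by (auto simp: block_iff)
qed

lemma card_block:
  assumes "j < length lam"
  shows "card (young_block lam j) = lam ! j"
  using ps_Suc[OF assms] unfolding young_block_def ps_def[symmetric] by simp

lemma cnt_cl:
  assumes "length lam = \<theta>" "sum_list lam = n" "j < \<theta>"
  shows "cnt n (cl lam) j = lam ! j"
proof -
  have "{x\<in>{1..n}. cl lam x = j} = young_block lam j"
    using cl_props[OF assms(1,2)] cl_unique block_sub[OF assms] by blast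
  then show ?thesis using card_block assms by (simp add: cnt_def)
qed

lemma young_iff:
  assumes "length lam = \<theta>" "sum_list lam = n" "s permutes {1..n}"
  shows "s \<in> young_subgroup lam \<longleftrightarrow> pres n (cl lam) s"
proof
  assume Y: "s \<in> young_subgroup lam"
  show "pres n (cl lam) s" unfolding pres_def
  proof
    fix x assume x: "x \<in> {1..n}"
    let ?j = "cl lam x"
    have j: "?j < \<theta>" "x \<in> young_block lam ?j" using cl_props[OF assms(1,2) x] by auto
    have "s ` young_block lam ?j = young_block lam ?j" using Y j assms(1) by (simp add: young_subgroup_def)
    then have "s x \<in> young_block lam ?j" using j by blast
    then show "cl lam (s x) = cl lam x" by (rule cl_unique)
  qed
next
  assume P: "pres n (cl lam) s"
  show "s \<in> young_subgroup lam" unfolding young_subgroup_def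
  proof (intro CollectI allI impI)
    fix j assume j: "j < length lam"
    let ?B = "young_block lam j"
    have sub: "?B \<subseteq> {1..n}" using block_sub assms j by blast
    have "s ` ?B \<subseteq> ?B"
    proof
      fix y assume "y \<in> s ` ?B"
      then obtain x where x: "x \<in> ?B" "y = s x" by auto
      have xn: "x \<in> {1..n}" using x sub by blast
      have "cl lam (s x) = cl lam x" using P xn by (simp add: pres_def)
      also have "\<dots> = j" using cl_unique x(1) .
      finally have clj: "cl lam y = j" using x by simp
      have yn: "y \<in> {1..n}" using x(2) perm_in[OF assms(3) xn] by simp
      have "y \<in> young_block lam (cl lam y)" using cl_props(2)[OF assms(1,2) yn] .
      then show "y \<in> ?B" unfolding clj .
    qed
    moreover have "inj_on s ?B" using inj_on_subset[OF permutes_inj[OF assms(3)] subset_UNIV] .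
    moreover have "finite ?B" by (simp add: young_block_def)
    ultimately show "s ` ?B = ?B" using endo_inj_surj by blast
  qed
qed

definition cv :: "nat \<Rightarrow> nat \<Rightarrow> (nat \<Rightarrow> nat) \<Rightarrow> nat list" where
  "cv \<theta> n c = map (cnt n c) [0..<\<theta>]"

lemma prob_young:
  assumes c: "c \<in> Col \<theta> n" and lam: "length lam = \<theta>" "sum_list lam = n"
    and ms: "mset lam = mset (cv \<theta> n c)"
  shows "measure_pmf.prob (sigma_pmf n \<beta>) {s. pres n c s} = measure_pmf.prob (sigma_pmf n \<beta>) (young_subgroup lam)"
proof -
  obtain f where f: "bij_betw f {..<length lam} {..<length (cv \<theta> n c)}"
      "\<forall>i<length lam. lam ! i = cv \<theta> n c ! f i"
    using permutation_Ex_bij[OF ms] by blast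
  have lcv: "length (cv \<theta> n c) = \<theta>" by (simp add: cv_def)
  define f' where "f' i = (if i < \<theta> then f i else i)" for i
  have fb: "bij_betw f' {..<\<theta>} {..<\<theta>}"
  proof -
    have bf: "bij_betw f {..<\<theta>} {..<\<theta>}" using f(1) lam(1) lcv by simp
    have "f' a = f a" if "a \<in> {..<\<theta>}" for a using that by (simp add: f'_def)
    then show ?thesis using bij_betw_cong[of "{..<\<theta>}" f' f "{..<\<theta>}"] bf by argo
  qed
  have fp: "f' permutes {..<\<theta>}" by (rule bij_imp_permutes[OF fb]) (simp add: f'_def)
  define \<tau> where "\<tau> = inv f'"
  have tp: "\<tau> permutes {..<\<theta>}" unfolding \<tau>_def using permutes_inv[OF fp] .
  have ti: "inj \<tau>" using permutes_inj[OF tp] .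
  have tf: "\<tau> a = i \<longleftrightarrow> a = f' i" for a i unfolding \<tau>_def permutes_inv_eq[OF fp] by auto
  have cvals: "c x < \<theta>" if "x \<in> {1..n}" for x using c that by (auto simp: Col_def PiE_def Pi_def)
  have cnt_tau: "cnt n (\<tau> \<circ> c) i = cnt n (cl lam) i" if i: "i < \<theta>" for i
  proof -
    have "cnt n (\<tau> \<circ> c) i = cnt n c (f' i)" unfolding cnt_def using tf by simp
    also have "\<dots> = cv \<theta> n c ! f i"
    proof -
      have "f i < \<theta>" using f(1) i lam(1) lcv by (auto simp: bij_betw_def)
      then show ?thesis using i by (simp add: f'_def cv_def)
    qed
    also have "\<dots> = lam ! i" using f(2) i lam(1) by simp
    also have "\<dots> = cnt n (cl lam) i" using cnt_cl[OF lam i] by simp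
    finally show ?thesis .
  qed
  have tv: "(\<tau> \<circ> c) x < \<theta>" if "x \<in> {1..n}" for x
    using perm_in_lt[OF tp cvals[OF that]] by simp
  have clv: "cl lam x < \<theta>" if "x \<in> {1..n}" for x using cl_props(1)[OF lam that] .
  obtain p where p: "p permutes {1..n}" "\<forall>x\<in>{1..n}. cl lam x = (\<tau> \<circ> c) (p x)"
    using same_counts_perm[of n "\<tau> \<circ> c" \<theta> "cl lam", OF tv clv cnt_tau] by blast
  have "measure_pmf.prob (sigma_pmf n \<beta>) (young_subgroup lam)
      = measure_pmf.prob (sigma_pmf n \<beta>) {s. pres n (cl lam) s}"
  proof (rule measure_pmf_cong_support)
    fix s assume "s \<in> set_pmf (sigma_pmf n \<beta>)"
    then have sp: "s permutes {1..n}" by (rule sigma_support)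
    show "s \<in> young_subgroup lam \<longleftrightarrow> s \<in> {s. pres n (cl lam) s}"
      using young_iff[OF lam sp] by simp
  qed
  also have "\<dots> = measure_pmf.prob (sigma_pmf n \<beta>) {s. pres n ((\<tau> \<circ> c) \<circ> p) s}"
  proof (rule measure_pmf_cong_support)
    fix s assume "s \<in> set_pmf (sigma_pmf n \<beta>)"
    then have sp: "s permutes {1..n}" by (rule sigma_support)
    have eq: "cl lam x = ((\<tau> \<circ> c) \<circ> p) x" if "x \<in> {1..n}" for x using p(2) that by simp
    show "s \<in> {s. pres n (cl lam) s} \<longleftrightarrow> s \<in> {s. pres n ((\<tau> \<circ> c) \<circ> p) s}"
      using pres_cong[of n "cl lam" "(\<tau> \<circ> c) \<circ> p" s, OF eq sp] by simp
  qed
  also have "\<dots> = measure_pmf.prob (sigma_pmf n \<beta>) {s. pres n (\<tau> \<circ> c) s}"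
    by (rule prob_pres_perm[OF p(1)])
  also have "\<dots> = measure_pmf.prob (sigma_pmf n \<beta>) {s. pres n c s}"
    using pres_inj[OF ti] by simp
  finally show ?thesis by (rule sym)
qed


definition Comp :: "nat \<Rightarrow> nat \<Rightarrow> nat list set" where
  "Comp \<theta> n = {mu. length mu = \<theta> \<and> sum_list mu = n}"

definition Msum :: "nat \<Rightarrow> nat list \<Rightarrow> nat multiset" where
  "Msum \<theta> mu = (\<Sum>i<\<theta>. replicate_mset (mu ! i) i)"

lemma count_Msum: "count (Msum \<theta> mu) j = (if j < \<theta> then mu ! j else 0)"
proof -
  have "count (Msum \<theta> mu) j = (\<Sum>i<\<theta>. if j = i then mu ! i else 0)"
    unfolding Msum_def count_sum by simp
  also have "\<dots> = (if j < \<theta> then mu ! j else 0)"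
    by (simp add: sum.delta)
  finally show ?thesis .
qed

lemma size_Msum: "length mu = \<theta> \<Longrightarrow> size (Msum \<theta> mu) = sum_list mu"
  unfolding Msum_def by (simp add: sum_list_sum_nth atLeast0LessThan)

lemma set_Msum: "set_mset (Msum \<theta> mu) \<subseteq> {..<\<theta>}"
proof
  fix j assume "j \<in># Msum \<theta> mu"
  then have "count (Msum \<theta> mu) j \<noteq> 0" by simp
  then show "j \<in> {..<\<theta>}" by (simp add: count_Msum split: if_splits)
qed

lemma cnt_list: "count (mset (map f [1..<Suc n])) i = cnt n f i"
proof -
  have d: "distinct [1..<Suc n]" by simp
  have st: "set [1..<Suc n] = {1..n}" by auto
  show ?thesis using cnt_list_gen[OF d, of f i, unfolded st] unfolding cnt_def .
qed

lemma cnt_big: "c \<in> Col \<theta> n \<Longrightarrow> i \<ge> \<theta> \<Longrightarrow> cnt n c i = 0"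
  unfolding cnt_def Col_def by (auto simp: PiE_def Pi_def)

lemma cv_nth: "i < \<theta> \<Longrightarrow> cv \<theta> n c ! i = cnt n c i"
  by (simp add: cv_def)

lemma card_fibre:
  assumes mu: "mu \<in> Comp \<theta> n"
  shows "card {c\<in>Col \<theta> n. cv \<theta> n c = mu} = card (permutations_of_multiset (Msum \<theta> mu))"
proof (rule bij_betw_same_card)
  let ?L = "\<lambda>c. map c [1..<Suc n]"
  let ?R = "\<lambda>xs. (\<lambda>x\<in>{1..n}. xs ! (x - 1))"
  have len: "length mu = \<theta>" "sum_list mu = n" using mu by (auto simp: Comp_def)
  show "bij_betw ?L {c\<in>Col \<theta> n. cv \<theta> n c = mu} (permutations_of_multiset (Msum \<theta> mu))"
  proof (rule bij_betw_byWitness[where f'="?R"])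
    show "\<forall>c\<in>{c\<in>Col \<theta> n. cv \<theta> n c = mu}. ?R (?L c) = c"
    proof
      fix c assume c: "c \<in> {c\<in>Col \<theta> n. cv \<theta> n c = mu}"
      show "?R (?L c) = c"
      proof
        fix x show "?R (?L c) x = c x"
        proof (cases "x \<in> {1..n}")
          case True
          then have e1: "[1..<Suc n] ! (x - 1) = x" by (simp del: upt_Suc add: nth_upt)
          have e2: "map c [1..<Suc n] ! (x - 1) = c ([1..<Suc n] ! (x - 1))"
            using True by (intro nth_map) auto
          show ?thesis using True e1 e2 by (simp del: upt_Suc)
        next
          case False
          have cC: "c \<in> {1..n} \<rightarrow>\<^sub>E {..<\<theta>}" using c by (simp add: Col_def)
          show ?thesis using PiE_arb[OF cC False] False by auto
        qed
      qed
    qed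
    show "\<forall>xs\<in>permutations_of_multiset (Msum \<theta> mu). ?L (?R xs) = xs"
    proof
      fix xs assume "xs \<in> permutations_of_multiset (Msum \<theta> mu)"
      then have "mset xs = Msum \<theta> mu" by (simp add: permutations_of_multiset_def)
      then have "length xs = n" using size_Msum[OF len(1)] len(2) by (metis size_mset)
      then show "?L (?R xs) = xs" by (intro nth_equalityI) (auto simp del: upt_Suc simp add: nth_upt)
    qed
    show "?L ` {c\<in>Col \<theta> n. cv \<theta> n c = mu} \<subseteq> permutations_of_multiset (Msum \<theta> mu)"
    proof
      fix xs assume "xs \<in> ?L ` {c\<in>Col \<theta> n. cv \<theta> n c = mu}"
      then obtain c where c: "c \<in> Col \<theta> n" "cv \<theta> n c = mu" "xs = ?L c" by auto
      have "mset xs = Msum \<theta> mu"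
      proof (rule multiset_eqI)
        fix i
        show "count (mset xs) i = count (Msum \<theta> mu) i"
        proof (cases "i < \<theta>")
          case True
          then show ?thesis using c cnt_list cv_nth[OF True, of n c] by (simp add: count_Msum)
        next
          case False
          then show ?thesis using c cnt_list cnt_big[OF c(1)] by (simp add: count_Msum)
        qed
      qed
      then show "xs \<in> permutations_of_multiset (Msum \<theta> mu)" by (simp add: permutations_of_multiset_def)
    qed
    show "?R ` permutations_of_multiset (Msum \<theta> mu) \<subseteq> {c\<in>Col \<theta> n. cv \<theta> n c = mu}"
    proof
      fix c assume "c \<in> ?R ` permutations_of_multiset (Msum \<theta> mu)"
      then obtain xs where xs: "mset xs = Msum \<theta> mu" "c = ?R xs"
        by (auto simp: permutations_of_multiset_def)
      have lx: "length xs = n" using size_Msum[OF len(1)] len(2) xs(1) by (metis size_mset)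
      have Lc: "?L c = xs" using lx xs(2) by (intro nth_equalityI) (auto simp del: upt_Suc simp add: nth_upt)
      have cC: "c \<in> Col \<theta> n" unfolding Col_def
      proof (rule PiE_I)
        fix x assume x: "x \<in> {1..n}"
        then have "x - 1 < length xs" using lx by auto
        then have "xs ! (x - 1) \<in> set_mset (Msum \<theta> mu)" using xs(1) by (metis nth_mem set_mset_mset)
        then show "c x \<in> {..<\<theta>}" using set_Msum x xs(2) by auto
      next
        fix x assume "x \<notin> {1..n}" then show "c x = undefined" using xs(2) by auto
      qed
      have "cv \<theta> n c = mu"
      proof (rule nth_equalityI)
        show "length (cv \<theta> n c) = length mu" using len by (simp add: cv_def)
        fix i assume "i < length (cv \<theta> n c)"
        then have i: "i < \<theta>" by (simp add: cv_def)
        have "cv \<theta> n c ! i = count (mset (?L c)) i" using cv_nth[OF i] cnt_list by simp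
        also have "\<dots> = mu ! i" using Lc xs(1) i by (simp add: count_Msum)
        finally show "cv \<theta> n c ! i = mu ! i" .
      qed
      then show "c \<in> {c\<in>Col \<theta> n. cv \<theta> n c = mu}" using cC by simp
    qed
  qed
qed

lemma prod_nth: "(\<Prod>i\<in>{0..<length xs}. f (xs ! i)) = (\<Prod>x\<leftarrow>xs. f x)"
  for f :: "'a \<Rightarrow> 'b::comm_monoid_mult"
  by (induction xs) (simp_all add: prod.atLeast0_lessThan_Suc_shift del: prod.op_ivl_Suc)

lemma prod_fact_Msum:
  assumes "length mu = \<theta>"
  shows "(\<Prod>x\<in>set_mset (Msum \<theta> mu). fact (count (Msum \<theta> mu) x)) = (\<Prod>j\<leftarrow>mu. fact j :: nat)"
proof -
  have "(\<Prod>x\<in>set_mset (Msum \<theta> mu). fact (count (Msum \<theta> mu) x)) = (\<Prod>x\<in>{..<\<theta>}. fact (count (Msum \<theta> mu) x) :: nat)"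
  proof (rule prod.mono_neutral_left)
    show "finite {..<\<theta>}" by simp
    show "set_mset (Msum \<theta> mu) \<subseteq> {..<\<theta>}" by (rule set_Msum)
    show "\<forall>i\<in>{..<\<theta>} - set_mset (Msum \<theta> mu). fact (count (Msum \<theta> mu) i) = (1::nat)"
      by (auto simp: count_eq_zero_iff[symmetric])
  qed
  also have "\<dots> = (\<Prod>x\<in>{..<\<theta>}. fact (mu ! x))" by (rule prod.cong) (auto simp: count_Msum)
  also have "\<dots> = (\<Prod>j\<leftarrow>mu. fact j)" using prod_nth[where xs=mu and f=fact] assms by (simp add: atLeast0LessThan)
  finally show ?thesis .
qed

lemma card_fibre_multinom:
  assumes mu: "mu \<in> Comp \<theta> n"
  shows "real (card {c\<in>Col \<theta> n. cv \<theta> n c = mu}) = multinom n mu"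
proof -
  have len: "length mu = \<theta>" "sum_list mu = n" using mu by (auto simp: Comp_def)
  have "card (permutations_of_multiset (Msum \<theta> mu)) * (\<Prod>x\<in>set_mset (Msum \<theta> mu). fact (count (Msum \<theta> mu) x))
      = fact (size (Msum \<theta> mu))" by (rule card_permutations_of_multiset_aux)
  then have eq: "card (permutations_of_multiset (Msum \<theta> mu)) * (\<Prod>j\<leftarrow>mu. fact j :: nat) = fact n"
    unfolding prod_fact_Msum[OF len(1)] size_Msum[OF len(1)] len(2) .
  have pr: "(\<Prod>j\<leftarrow>mu. fact j :: real) = real (\<Prod>j\<leftarrow>mu. fact j :: nat)"
    by (induction mu) simp_all
  have pos: "real (\<Prod>j\<leftarrow>mu. fact j :: nat) > 0" by (induction mu) simp_all
  have "real (card (permutations_of_multiset (Msum \<theta> mu))) * real (\<Prod>j\<leftarrow>mu. fact j :: nat) = fact n"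
    using arg_cong[of _ _ real, OF eq] by (metis of_nat_mult of_nat_fact)
  then have "real (card (permutations_of_multiset (Msum \<theta> mu))) = fact n / real (\<Prod>j\<leftarrow>mu. fact j :: nat)"
    using pos by (simp add: eq_divide_eq)
  then show ?thesis using card_fibre[OF mu] unfolding multinom_def pr by simp
qed


lemma expect_sum_ind:
  fixes M :: "'a pmf" and e :: "'b \<Rightarrow> real"
  assumes "finite I"
  shows "measure_pmf.expectation M (\<lambda>s. \<Sum>i\<in>I. if P i s then e i else 0)
       = (\<Sum>i\<in>I. e i * measure_pmf.prob M {s. P i s})"
proof -
  have eq: "(\<lambda>s. \<Sum>i\<in>I. if P i s then e i else 0) = (\<lambda>s. \<Sum>i\<in>I. e i * indicator {s. P i s} s)"
    by (auto simp: indicator_def intro!: sum.cong)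
  have int: "integrable (measure_pmf M) (\<lambda>s. e i * indicator {s. P i s} s)" for i
    by (intro integrable_mult_right integrable_real_indicator) (auto simp: less_top[symmetric])
  have "measure_pmf.expectation M (\<lambda>s. \<Sum>i\<in>I. e i * indicator {s. P i s} s)
      = (\<Sum>i\<in>I. measure_pmf.expectation M (\<lambda>s. e i * indicator {s. P i s} s))"
    by (rule Bochner_Integration.integral_sum) (rule int)
  also have "\<dots> = (\<Sum>i\<in>I. e i * measure_pmf.prob M {s. P i s})"
    by (intro sum.cong refl) simp
  finally show ?thesis unfolding eq .
qed

lemma expect_cong_support:
  fixes M :: "'a pmf" and f g :: "'a \<Rightarrow> real"
  assumes "\<And>s. s \<in> set_pmf M \<Longrightarrow> f s = g s"
  shows "measure_pmf.expectation M f = measure_pmf.expectation M g"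
  by (rule integral_cong_AE) (auto simp: AE_measure_pmf_iff assms)

definition sortd :: "nat list \<Rightarrow> nat list" where "sortd mu = rev (sort mu)"

lemma mset_sortd: "mset (sortd mu) = mset mu" by (simp add: sortd_def)
lemma length_sortd: "length (sortd mu) = length mu" by (simp add: sortd_def)
lemma sum_sortd: "sum_list (sortd mu) = sum_list mu"
  by (metis mset_sortd sum_mset_sum_list)
lemma sorted_sortd: "sorted_wrt (\<ge>) (sortd mu)"
  by (simp add: sortd_def sorted_wrt_rev)
lemma set_sortd: "set (sortd mu) = set mu" by (simp add: sortd_def)

lemma sortd_part: "sorted_wrt (\<ge>) lam \<Longrightarrow> sortd lam = lam"
proof -
  assume s: "sorted_wrt (\<ge>) lam"
  have "sorted (rev lam)" using s by (simp add: sorted_wrt_rev)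
  then have "sort lam = rev lam" by (intro properties_for_sort) simp_all
  then show ?thesis by (simp add: sortd_def)
qed

lemma sortd_mset_eq: "mset a = mset b \<Longrightarrow> sortd a = sortd b"
  unfolding sortd_def by (metis sort_key_inj_key_eq properties_for_sort mset_sort sorted_sort)

lemma multinom_mset: "mset a = mset b \<Longrightarrow> multinom n a = multinom n b"
proof -
  assume m: "mset a = mset b"
  have "(\<Prod>j\<leftarrow>a. fact j :: real) = (\<Prod>j\<leftarrow>b. fact j :: real)"
    by (metis m mset_map prod_mset_prod_list)
  then show ?thesis by (simp add: multinom_def)
qed

lemma finite_Comp: "finite (Comp \<theta> n)"
proof (rule finite_subset)
  show "Comp \<theta> n \<subseteq> {xs. set xs \<subseteq> {0..n} \<and> length xs = \<theta>}"
  proof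
    fix xs assume "xs \<in> Comp \<theta> n"
    then have "sum_list xs = n" "length xs = \<theta>" by (auto simp: Comp_def)
    moreover have "x \<le> sum_list xs" if "x \<in> set xs" for x using that by (simp add: member_le_sum_list)
    ultimately show "xs \<in> {xs. set xs \<subseteq> {0..n} \<and> length xs = \<theta>}" by auto
  qed
  show "finite {xs. set xs \<subseteq> {0..n} \<and> length xs = \<theta>}" by (rule finite_lists_length_eq) simp
qed

lemma cv_Comp:
  assumes c: "c \<in> Col \<theta> n"
  shows "cv \<theta> n c \<in> Comp \<theta> n"
proof -
  have "sum_list (cv \<theta> n c) = (\<Sum>i<\<theta>. cnt n c i)"
    unfolding cv_def by (simp add: sum_list_sum_nth atLeast0LessThan)
  also have "\<dots> = (\<Sum>i<\<theta>. card {x\<in>{1..n}. c x = i})" by (simp add: cnt_def)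
  also have "\<dots> = (\<Sum>i<\<theta>. \<Sum>x\<in>{x\<in>{1..n}. c x = i}. (1::nat))" by simp
  also have "\<dots> = (\<Sum>x\<in>{1..n}. (1::nat))"
    by (rule sum.group) (use c in \<open>auto simp: Col_def PiE_def Pi_def\<close>)
  also have "\<dots> = n" by simp
  finally show ?thesis by (simp add: Comp_def cv_def)
qed

lemma key_identity:
  fixes h :: real
  assumes th: "\<theta> \<ge> 1"
  shows "measure_pmf.expectation (sigma_pmf n \<beta>) (\<lambda>s. \<Prod>\<gamma>\<in>cycles n s. exp (h * real (card \<gamma>)) + real \<theta> - 1)
     = (\<Sum>mu\<in>Comp \<theta> n. exp (h * real (mu ! 0)) * G n \<beta> (sortd mu))"
proof -
  let ?S = "sigma_pmf n \<beta>"
  let ?p = "\<lambda>c. measure_pmf.prob ?S {s. pres n c s}"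
  have finCol: "finite (Col \<theta> n)" unfolding Col_def by (simp add: finite_PiE)
  have "measure_pmf.expectation ?S (\<lambda>s. \<Prod>\<gamma>\<in>cycles n s. exp (h * real (card \<gamma>)) + real \<theta> - 1)
      = measure_pmf.expectation ?S (\<lambda>s. \<Sum>c\<in>Col \<theta> n. if pres n c s then exp (h * real (cnt n c 0)) else 0)"
    by (rule expect_cong_support) (rule stepA[OF sigma_support th])
  also have "\<dots> = (\<Sum>c\<in>Col \<theta> n. exp (h * real (cnt n c 0)) * ?p c)"
    by (rule expect_sum_ind[OF finCol])
  also have "\<dots> = (\<Sum>mu\<in>Comp \<theta> n. \<Sum>c\<in>{c\<in>Col \<theta> n. cv \<theta> n c = mu}. exp (h * real (cnt n c 0)) * ?p c)"
    by (rule sum.group[symmetric]) (use finCol finite_Comp cv_Comp in auto)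
  also have "\<dots> = (\<Sum>mu\<in>Comp \<theta> n. exp (h * real (mu ! 0)) * G n \<beta> (sortd mu))"
  proof (rule sum.cong[OF refl])
    fix mu assume mu: "mu \<in> Comp \<theta> n"
    have len: "length mu = \<theta>" "sum_list mu = n" using mu by (auto simp: Comp_def)
    have tm: "exp (h * real (cnt n c 0)) * ?p c
        = exp (h * real (mu ! 0)) * measure_pmf.prob ?S (young_subgroup (sortd mu))"
      if c: "c \<in> {c\<in>Col \<theta> n. cv \<theta> n c = mu}" for c
    proof -
      have "cnt n c 0 = mu ! 0" using c cv_nth[of 0 \<theta> n c] th by auto
      moreover have "?p c = measure_pmf.prob ?S (young_subgroup (sortd mu))"
        by (rule prob_young) (use c len in \<open>auto simp: length_sortd sum_sortd mset_sortd\<close>)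
      ultimately show ?thesis by simp
    qed
    have "(\<Sum>c\<in>{c\<in>Col \<theta> n. cv \<theta> n c = mu}. exp (h * real (cnt n c 0)) * ?p c)
        = (\<Sum>c\<in>{c\<in>Col \<theta> n. cv \<theta> n c = mu}. exp (h * real (mu ! 0)) * measure_pmf.prob ?S (young_subgroup (sortd mu)))"
      by (rule sum.cong[OF refl]) (rule tm)
    also have "\<dots> = real (card {c\<in>Col \<theta> n. cv \<theta> n c = mu}) * (exp (h * real (mu ! 0)) * measure_pmf.prob ?S (young_subgroup (sortd mu)))"
      by simp
    also have "\<dots> = exp (h * real (mu ! 0)) * (multinom n (sortd mu) * measure_pmf.prob ?S (young_subgroup (sortd mu)))"
      using card_fibre_multinom[OF mu] multinom_mset[OF mset_sortd[symmetric], of n mu] by simp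
    finally show "(\<Sum>c\<in>{c\<in>Col \<theta> n. cv \<theta> n c = mu}. exp (h * real (cnt n c 0)) * ?p c)
        = exp (h * real (mu ! 0)) * G n \<beta> (sortd mu)" by (simp add: G_def)
  qed
  finally show ?thesis .
qed


lemma G_nonneg: "G n \<beta> lam \<ge> 0"
proof -
  have "(\<Prod>j\<leftarrow>lam. fact j :: real) > 0" by (induction lam) simp_all
  then have "multinom n lam \<ge> 0" unfolding multinom_def by simp
  then show ?thesis unfolding G_def by simp
qed

lemma sortd_in_part: "mu \<in> Comp \<theta> n \<Longrightarrow> sortd mu \<in> partitions \<theta> n"
  by (simp add: Comp_def partitions_def length_sortd sum_sortd sorted_sortd)

lemma part_in_Comp: "lam \<in> partitions \<theta> n \<Longrightarrow> lam \<in> Comp \<theta> n"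
  by (simp add: Comp_def partitions_def)

lemma finite_part: "finite (partitions \<theta> n)"
  using finite_subset[OF _ finite_Comp] part_in_Comp by blast

lemma card_sortd_fibre:
  assumes "length lam = \<theta>"
  shows "card {mu\<in>Comp \<theta> n. sortd mu = lam} \<le> fact \<theta>"
proof -
  have sub: "{mu\<in>Comp \<theta> n. sortd mu = lam} \<subseteq> permutations_of_multiset (mset lam)"
    using mset_sortd by (auto simp: permutations_of_multiset_def)
  have eq: "card (permutations_of_multiset (mset lam)) * (\<Prod>x\<in>set_mset (mset lam). fact (count (mset lam) x)) = fact \<theta>"
    using card_permutations_of_multiset_aux[of "mset lam"] assms by simp
  have pos: "(\<Prod>x\<in>set_mset (mset lam). fact (count (mset lam) x)) \<ge> (1::nat)"
    by (intro prod_ge_1) (simp add: Suc_le_eq)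
  have "card (permutations_of_multiset (mset lam)) \<le> card (permutations_of_multiset (mset lam)) * (\<Prod>x\<in>set_mset (mset lam). fact (count (mset lam) x))"
    using pos by simp
  then have "card (permutations_of_multiset (mset lam)) \<le> fact \<theta>" using eq by linarith
  moreover have "card {mu\<in>Comp \<theta> n. sortd mu = lam} \<le> card (permutations_of_multiset (mset lam))"
    by (rule card_mono[OF finite_permutations_of_multiset sub])
  ultimately show ?thesis by simp
qed

lemma bounds:
  fixes w W :: "nat list \<Rightarrow> real" and r :: "nat list \<Rightarrow> nat list"
  assumes th: "\<theta> \<ge> 1"
    and wle: "\<And>mu. mu \<in> Comp \<theta> n \<Longrightarrow> w mu \<le> W (sortd mu)"
    and wpos: "\<And>mu. w mu \<ge> 0" and Wpos: "\<And>lam. W lam \<ge> 0"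
    and r: "\<And>lam. lam \<in> partitions \<theta> n \<Longrightarrow> r lam \<in> Comp \<theta> n \<and> sortd (r lam) = lam \<and> w (r lam) = W lam"
    and rinj: "inj_on r (partitions \<theta> n)"
  shows "(\<Sum>lam\<in>partitions \<theta> n. W lam * G n \<beta> lam) \<le> (\<Sum>mu\<in>Comp \<theta> n. w mu * G n \<beta> (sortd mu))"
    and "(\<Sum>mu\<in>Comp \<theta> n. w mu * G n \<beta> (sortd mu)) \<le> fact \<theta> * (\<Sum>lam\<in>partitions \<theta> n. W lam * G n \<beta> lam)"
proof -
  have "(\<Sum>lam\<in>partitions \<theta> n. W lam * G n \<beta> lam) = (\<Sum>lam\<in>partitions \<theta> n. w (r lam) * G n \<beta> (sortd (r lam)))"
    using r by (intro sum.cong) auto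
  also have "\<dots> = (\<Sum>mu\<in>r ` partitions \<theta> n. w mu * G n \<beta> (sortd mu))"
    using sum.reindex[OF rinj, of "\<lambda>mu. w mu * G n \<beta> (sortd mu)"] by simp
  also have "\<dots> \<le> (\<Sum>mu\<in>Comp \<theta> n. w mu * G n \<beta> (sortd mu))"
    by (rule sum_mono2[OF finite_Comp]) (use r in \<open>auto intro!: mult_nonneg_nonneg wpos G_nonneg\<close>)
  finally show "(\<Sum>lam\<in>partitions \<theta> n. W lam * G n \<beta> lam) \<le> (\<Sum>mu\<in>Comp \<theta> n. w mu * G n \<beta> (sortd mu))" .
  have "(\<Sum>mu\<in>Comp \<theta> n. w mu * G n \<beta> (sortd mu)) \<le> (\<Sum>mu\<in>Comp \<theta> n. W (sortd mu) * G n \<beta> (sortd mu))"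
    by (intro sum_mono mult_right_mono wle G_nonneg)
  also have "\<dots> = (\<Sum>lam\<in>partitions \<theta> n. \<Sum>mu\<in>{mu\<in>Comp \<theta> n. sortd mu = lam}. W (sortd mu) * G n \<beta> (sortd mu))"
    by (rule sum.group[symmetric]) (use finite_Comp finite_part sortd_in_part in auto)
  also have "\<dots> = (\<Sum>lam\<in>partitions \<theta> n. real (card {mu\<in>Comp \<theta> n. sortd mu = lam}) * (W lam * G n \<beta> lam))"
  proof (rule sum.cong[OF refl])
    fix lam
    have "(\<Sum>mu\<in>{mu\<in>Comp \<theta> n. sortd mu = lam}. W (sortd mu) * G n \<beta> (sortd mu))
        = (\<Sum>mu\<in>{mu\<in>Comp \<theta> n. sortd mu = lam}. W lam * G n \<beta> lam)" by (rule sum.cong) auto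
    then show "(\<Sum>mu\<in>{mu\<in>Comp \<theta> n. sortd mu = lam}. W (sortd mu) * G n \<beta> (sortd mu))
        = real (card {mu\<in>Comp \<theta> n. sortd mu = lam}) * (W lam * G n \<beta> lam)" by simp
  qed
  also have "\<dots> \<le> (\<Sum>lam\<in>partitions \<theta> n. fact \<theta> * (W lam * G n \<beta> lam))"
  proof (rule sum_mono)
    fix lam assume "lam \<in> partitions \<theta> n"
    then have "length lam = \<theta>" by (simp add: partitions_def)
    then have "real (card {mu\<in>Comp \<theta> n. sortd mu = lam}) \<le> fact \<theta>"
      using card_sortd_fibre[of lam \<theta> n] by (metis of_nat_fact of_nat_le_iff)
    then show "real (card {mu\<in>Comp \<theta> n. sortd mu = lam}) * (W lam * G n \<beta> lam) \<le> fact \<theta> * (W lam * G n \<beta> lam)"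
      by (intro mult_right_mono mult_nonneg_nonneg Wpos G_nonneg)
  qed
  also have "\<dots> = fact \<theta> * (\<Sum>lam\<in>partitions \<theta> n. W lam * G n \<beta> lam)"
    by (simp add: sum_distrib_left)
  finally show "(\<Sum>mu\<in>Comp \<theta> n. w mu * G n \<beta> (sortd mu)) \<le> fact \<theta> * (\<Sum>lam\<in>partitions \<theta> n. W lam * G n \<beta> lam)" .
qed

lemma asymp_from_bounds:
  fixes a b :: "nat \<Rightarrow> real" and C :: real
  assumes "C \<ge> 1" "\<And>n. b n \<le> a n" "\<And>n. a n \<le> C * b n" "\<And>n. b n \<ge> 0"
  shows "asymp_equiv a b"
  unfolding asymp_equiv_def
proof (intro exI[of _ C] conjI allI)
  show "C > 0" using assms(1) by simp
  fix n
  have "b n / C \<le> b n / 1" by (rule divide_left_mono) (use assms(1) assms(4)[of n] in auto)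
  then have "b n / C \<le> b n" by simp
  then show "b n / C \<le> a n" using assms(2)[of n] by simp
  show "a n \<le> C * b n" by (rule assms(3))
qed

lemma sorted_desc_bounds:
  fixes l :: "nat list"
  assumes "sorted_wrt (\<ge>) l" "i < length l"
  shows "l ! i \<le> l ! 0" "l ! (length l - 1) \<le> l ! i"
proof -
  have nth: "\<And>i j. i < j \<Longrightarrow> j < length l \<Longrightarrow> l ! j \<le> l ! i"
    using assms(1) by (simp add: sorted_wrt_iff_nth_less)
  show "l ! i \<le> l ! 0" using nth[of 0 i] assms(2) by (cases "i = 0") auto
  show "l ! (length l - 1) \<le> l ! i" using nth[of i "length l - 1"] assms(2) by (cases "i = length l - 1") auto
qed

lemma first_bounds:
  assumes "mu \<in> Comp \<theta> n" "\<theta> \<ge> 1"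
  shows "mu ! 0 \<le> sortd mu ! 0" "sortd mu ! (\<theta> - 1) \<le> mu ! 0"
proof -
  have len: "length mu = \<theta>" using assms by (simp add: Comp_def)
  have "mu ! 0 \<in> set (sortd mu)" using len assms(2) by (simp add: set_sortd)
  then obtain i where i: "i < length (sortd mu)" "sortd mu ! i = mu ! 0" by (auto simp: in_set_conv_nth)
  have ls: "length (sortd mu) = \<theta>" using len by (simp add: length_sortd)
  show "mu ! 0 \<le> sortd mu ! 0" using sorted_desc_bounds(1)[OF sorted_sortd i(1)] i(2) by simp
  show "sortd mu ! (\<theta> - 1) \<le> mu ! 0" using sorted_desc_bounds(2)[OF sorted_sortd i(1)] i(2) ls by simp
qed


theorem lemma2p2:
  fixes \<theta> :: nat and \<beta> h :: real
  assumes "\<theta> \<ge> 2" and "\<beta> > 0"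
  shows "asymp_equiv (\<lambda>n. Z \<theta> n \<beta>) (\<lambda>n. \<Sum>lam\<in>partitions \<theta> n. G n \<beta> lam)
    \<and> (h > 0 \<longrightarrow> asymp_equiv (\<lambda>n. exp ((h / real \<theta>) * real n) * Zh \<theta> n \<beta> h)
            (\<lambda>n. \<Sum>lam\<in>partitions \<theta> n. exp (h * real (lam ! 0)) * G n \<beta> lam))
    \<and> (h < 0 \<longrightarrow> asymp_equiv (\<lambda>n. exp ((h / real \<theta>) * real n) * Zh \<theta> n \<beta> h)
            (\<lambda>n. \<Sum>lam\<in>partitions \<theta> n. exp (h * real (lam ! (\<theta> - 1))) * G n \<beta> lam))"
proof -
  have th: "\<theta> \<ge> 1" using assms(1) by simp
  define F where "F h' n = measure_pmf.expectation (sigma_pmf n \<beta>)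
      (\<lambda>s. \<Prod>\<gamma>\<in>cycles n s. exp (h' * real (card \<gamma>)) + real \<theta> - 1)" for h' n
  have KI: "F h' n = (\<Sum>mu\<in>Comp \<theta> n. exp (h' * real (mu ! 0)) * G n \<beta> (sortd mu))" for h' n
    unfolding F_def by (rule key_identity[OF th])
  have ZF: "Z \<theta> n \<beta> = F 0 n" for n
  proof -
    have "(\<lambda>s. real \<theta> ^ card (cycles n s)) = (\<lambda>s. \<Prod>\<gamma>\<in>cycles n s. exp (0 * real (card \<gamma>)) + real \<theta> - 1)"
      by (rule ext) simp
    then show ?thesis unfolding Z_def F_def by simp
  qed
  have ZhF: "exp ((h / real \<theta>) * real n) * Zh \<theta> n \<beta> h = F h n" for n
  proof -
    have "exp ((h / real \<theta>) * real n) * exp (- (h / real \<theta>) * real n) = 1"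
      by (simp add: exp_add[symmetric])
    then show ?thesis unfolding Zh_def F_def by (simp add: mult.assoc[symmetric])
  qed
  have C1: "fact \<theta> \<ge> (1::real)" by simp
  have partI: "lam \<in> Comp \<theta> n \<and> sortd lam = lam" if "lam \<in> partitions \<theta> n" for lam n
    using that part_in_Comp sortd_part by (auto simp: partitions_def)
  have nonneg: "(\<Sum>lam\<in>partitions \<theta> n. W lam * G n \<beta> lam) \<ge> 0" if "\<And>l. W l \<ge> 0" for W :: "nat list \<Rightarrow> real" and n
    by (intro sum_nonneg mult_nonneg_nonneg that G_nonneg)
  have P1: "asymp_equiv (\<lambda>n. Z \<theta> n \<beta>) (\<lambda>n. \<Sum>lam\<in>partitions \<theta> n. G n \<beta> lam)"
  proof (rule asymp_from_bounds[OF C1])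
    fix n
    note B = bounds[OF th, of n "\<lambda>_. 1" "\<lambda>_. 1" id \<beta>]
    have B1: "(\<Sum>lam\<in>partitions \<theta> n. 1 * G n \<beta> lam) \<le> (\<Sum>mu\<in>Comp \<theta> n. 1 * G n \<beta> (sortd mu))"
      and B2: "(\<Sum>mu\<in>Comp \<theta> n. 1 * G n \<beta> (sortd mu)) \<le> fact \<theta> * (\<Sum>lam\<in>partitions \<theta> n. 1 * G n \<beta> lam)"
      using B partI by auto
    have Zeq: "Z \<theta> n \<beta> = (\<Sum>mu\<in>Comp \<theta> n. 1 * G n \<beta> (sortd mu))" using ZF KI by simp
    show "(\<Sum>lam\<in>partitions \<theta> n. G n \<beta> lam) \<le> Z \<theta> n \<beta>" using B1 Zeq by simp
    show "Z \<theta> n \<beta> \<le> fact \<theta> * (\<Sum>lam\<in>partitions \<theta> n. G n \<beta> lam)" using B2 Zeq by simp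
    show "(\<Sum>lam\<in>partitions \<theta> n. G n \<beta> lam) \<ge> 0" using nonneg[of "\<lambda>_. 1" n] by simp
  qed
  have P2: "asymp_equiv (\<lambda>n. exp ((h / real \<theta>) * real n) * Zh \<theta> n \<beta> h)
            (\<lambda>n. \<Sum>lam\<in>partitions \<theta> n. exp (h * real (lam ! 0)) * G n \<beta> lam)" if hp: "h > 0"
  proof (rule asymp_from_bounds[OF C1])
    fix n
    let ?w = "\<lambda>mu::nat list. exp (h * real (mu ! 0))"
    have wle: "?w mu \<le> ?w (sortd mu)" if "mu \<in> Comp \<theta> n" for mu
      using first_bounds(1)[OF that th] hp by simp
    note B = bounds[where w="?w" and W="?w" and r=id and \<theta>=\<theta> and n=n and \<beta>=\<beta>]
    have B1: "(\<Sum>lam\<in>partitions \<theta> n. ?w lam * G n \<beta> lam) \<le> (\<Sum>mu\<in>Comp \<theta> n. ?w mu * G n \<beta> (sortd mu))"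
      and B2: "(\<Sum>mu\<in>Comp \<theta> n. ?w mu * G n \<beta> (sortd mu)) \<le> fact \<theta> * (\<Sum>lam\<in>partitions \<theta> n. ?w lam * G n \<beta> lam)"
      using B partI wle th by auto
    show "(\<Sum>lam\<in>partitions \<theta> n. ?w lam * G n \<beta> lam) \<le> exp ((h / real \<theta>) * real n) * Zh \<theta> n \<beta> h"
      using B1 ZhF KI by simp
    show "exp ((h / real \<theta>) * real n) * Zh \<theta> n \<beta> h \<le> fact \<theta> * (\<Sum>lam\<in>partitions \<theta> n. ?w lam * G n \<beta> lam)"
      using B2 ZhF KI by simp
    show "(\<Sum>lam\<in>partitions \<theta> n. ?w lam * G n \<beta> lam) \<ge> 0" using nonneg[of ?w n] by simp
  qed
  have P3: "asymp_equiv (\<lambda>n. exp ((h / real \<theta>) * real n) * Zh \<theta> n \<beta> h)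
            (\<lambda>n. \<Sum>lam\<in>partitions \<theta> n. exp (h * real (lam ! (\<theta> - 1))) * G n \<beta> lam)" if hn: "h < 0"
  proof (rule asymp_from_bounds[OF C1])
    fix n
    let ?w = "\<lambda>mu::nat list. exp (h * real (mu ! 0))"
    let ?W = "\<lambda>lam::nat list. exp (h * real (lam ! (\<theta> - 1)))"
    have wle: "?w mu \<le> ?W (sortd mu)" if "mu \<in> Comp \<theta> n" for mu
    proof -
      have "real (sortd mu ! (\<theta> - 1)) \<le> real (mu ! 0)" using first_bounds(2)[OF that th] by simp
      then have "h * real (mu ! 0) \<le> h * real (sortd mu ! (\<theta> - 1))" using hn by (simp add: mult_left_mono_neg)
      then show ?thesis by simp
    qed
    have r: "rev lam \<in> Comp \<theta> n \<and> sortd (rev lam) = lam \<and> ?w (rev lam) = ?W lam"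
      if lp: "lam \<in> partitions \<theta> n" for lam
    proof -
      have len: "length lam = \<theta>" "sum_list lam = n" "sorted_wrt (\<ge>) lam" using lp by (auto simp: partitions_def)
      have "rev lam \<in> Comp \<theta> n" using len by (simp add: Comp_def sum_list_rev)
      moreover have "sortd (rev lam) = lam"
        using sortd_mset_eq[of "rev lam" lam] sortd_part[OF len(3)] by simp
      moreover have "rev lam ! 0 = lam ! (\<theta> - 1)" using len th by (simp add: rev_nth)
      ultimately show ?thesis by simp
    qed
    have ri: "inj_on rev (partitions \<theta> n)" by (simp add: inj_on_def)
    note B = bounds[where w="?w" and W="?W" and r=rev and \<theta>=\<theta> and n=n and \<beta>=\<beta>]
    have B1: "(\<Sum>lam\<in>partitions \<theta> n. ?W lam * G n \<beta> lam) \<le> (\<Sum>mu\<in>Comp \<theta> n. ?w mu * G n \<beta> (sortd mu))"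
      and B2: "(\<Sum>mu\<in>Comp \<theta> n. ?w mu * G n \<beta> (sortd mu)) \<le> fact \<theta> * (\<Sum>lam\<in>partitions \<theta> n. ?W lam * G n \<beta> lam)"
      using B r ri wle th by auto
    show "(\<Sum>lam\<in>partitions \<theta> n. ?W lam * G n \<beta> lam) \<le> exp ((h / real \<theta>) * real n) * Zh \<theta> n \<beta> h"
      using B1 ZhF KI by simp
    show "exp ((h / real \<theta>) * real n) * Zh \<theta> n \<beta> h \<le> fact \<theta> * (\<Sum>lam\<in>partitions \<theta> n. ?W lam * G n \<beta> lam)"
      using B2 ZhF KI by simp
    show "(\<Sum>lam\<in>partitions \<theta> n. ?W lam * G n \<beta> lam) \<ge> 0" using nonneg[of ?W n] by simp
  qed
  show ?thesis using P1 P2 P3 by blast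
qed

end
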